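(* Let $\mathbb T=\mathbb{R}/\mathbb{Z}$, let $\sigma_1,\sigma_2:\mathbb T\to\mathbb T$ be measurable maps with $\lambda_{\mathbb T}(\sigma_i^{-1}(\mathbb{Q}/\mathbb{Z}))=0$ for $i=1,2$, and let $\Gamma$ be the group generated by $h(x,y)=(x+\sigma_2(y),y)$ and $v(x,y)=(x,y+\sigma_1(x))$ acting on $\mathbb T^2$. Then the action of $\Gamma$ on $\mathbb T^2$ is ergodic with respect to the Lebesgue measure $\lambda_{\mathbb T^2}$.
   Context: $\lambda_{\mathbb T^d}$ denotes the normalized Lebesgue measure on $\mathbb T^d$; $h,v$ are invertible and preserve $\lambda_{\mathbb T^2}$. *)

theory Defs
  imports "HOL-Analysis.Analysis"
begin

text \<open>The circle T = R/Z is represented by the fundamental domain [0,1),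
  with addition modulo 1 given by frac. T^2 is the unit square [0,1)^2;
  Lebesgue measure on it (restriction of lborel) is already normalized.\<close>

definition torus :: "real set" where
  "torus = {0..<1}"

definition torus2 :: "(real \<times> real) set" where
  "torus2 = torus \<times> torus"

definition hmap :: "(real \<Rightarrow> real) \<Rightarrow> real \<times> real \<Rightarrow> real \<times> real" where
  "hmap \<sigma>2 = (\<lambda>(x, y). (frac (x + \<sigma>2 y), y))"

definition vmap :: "(real \<Rightarrow> real) \<Rightarrow> real \<times> real \<Rightarrow> real \<times> real" where
  "vmap \<sigma>1 = (\<lambda>(x, y). (x, frac (y + \<sigma>1 x)))"

definition hinv :: "(real \<Rightarrow> real) \<Rightarrow> real \<times> real \<Rightarrow> real \<times> real" where
  "hinv \<sigma>2 = (\<lambda>(x, y). (frac (x - \<sigma>2 y), y))"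

definition vinv :: "(real \<Rightarrow> real) \<Rightarrow> real \<times> real \<Rightarrow> real \<times> real" where
  "vinv \<sigma>1 = (\<lambda>(x, y). (x, frac (y - \<sigma>1 x)))"

text \<open>Group generated by a set S of maps that is closed under inverses:
  all finite compositions of elements of S (including the identity).\<close>
inductive_set gen_group :: "('a \<Rightarrow> 'a) set \<Rightarrow> ('a \<Rightarrow> 'a) set" for S where
  gen_id: "id \<in> gen_group S"
| gen_base: "s \<in> S \<Longrightarrow> s \<in> gen_group S"
| gen_comp: "g \<in> gen_group S \<Longrightarrow> f \<in> gen_group S \<Longrightarrow> g \<circ> f \<in> gen_group S"

definition Gamma :: "(real \<Rightarrow> real) \<Rightarrow> (real \<Rightarrow> real) \<Rightarrow> (real \<times> real \<Rightarrow> real \<times> real) set" where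
  "Gamma \<sigma>1 \<sigma>2 = gen_group {hmap \<sigma>2, vmap \<sigma>1, hinv \<sigma>2, vinv \<sigma>1}"

definition ergodic_action :: "(real \<times> real) set \<Rightarrow> (real \<times> real \<Rightarrow> real \<times> real) set \<Rightarrow> bool" where
  "ergodic_action X G \<longleftrightarrow>
     (\<forall>A \<in> sets lborel. A \<subseteq> X \<longrightarrow> (\<forall>g \<in> G. g -` A \<inter> X = A) \<longrightarrow>
        emeasure lborel A = 0 \<or> emeasure lborel A = emeasure lborel X)"

end

theory Submission
  imports Defs
begin
lemma lborel_translate:
  fixes t :: real
  assumes "S \<in> sets borel"
  shows "emeasure lborel ((\<lambda>x. t + x) -` S) = emeasure lborel S"
proof -
  have "lborel = density (distr lborel borel (\<lambda>x. t + 1 * x)) (\<lambda>_. ennreal (abs 1))"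
    by (rule lborel_real_affine) simp
  then have e: "lborel = distr lborel borel (\<lambda>x. t + x)"
    by (simp add: density_1)
  have "emeasure lborel S = emeasure (distr lborel borel (\<lambda>x. t + x)) S"
    using e by simp
  also have "\<dots> = emeasure lborel ((\<lambda>x. t + x) -` S \<inter> space lborel)"
    by (rule emeasure_distr) (use assms in auto)
  finally show ?thesis by simp
qed

lemma measure_translate:
  fixes t :: real
  assumes "S \<in> sets borel"
  shows "measure lborel ((\<lambda>x. t + x) -` S) = measure lborel S"
  using lborel_translate[OF assms, of t] by (simp add: measure_def)

lemma nn_translate:
  fixes f :: "real \<Rightarrow> ennreal"
  assumes [measurable]: "f \<in> borel_measurable borel"
  shows "(\<integral>\<^sup>+x. f (x + t) \<partial>lborel) = (\<integral>\<^sup>+x. f x \<partial>lborel)"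
  using nn_integral_real_affine[OF assms, of 1 t] by (simp add: add.commute)

lemma fm_Ioc: "{a<..b::real} \<in> fmeasurable lborel"
proof (intro fmeasurableI)
  show "emeasure lborel {a<..b} < \<infinity>"
  proof (cases "a \<le> b")
    case True then show ?thesis by (simp add: emeasure_lborel_Ioc)
  next
    case False then show ?thesis by simp
  qed
qed simp

lemma fm_sub_Ioc: "S \<in> sets borel \<Longrightarrow> S \<subseteq> {a<..b::real} \<Longrightarrow> S \<in> fmeasurable lborel"
  by (rule fmeasurableI2[OF fm_Ioc]) auto


lemma rot_inv_P:
  fixes B :: "real set"
  assumes inv: "\<And>x. x \<in> {0..<1} \<Longrightarrow> x \<in> B \<longleftrightarrow> frac (x + \<alpha>) \<in> B"
  shows "frac (x + real k * \<alpha> - of_int h) \<in> B \<longleftrightarrow> frac x \<in> B"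
proof -
  have "frac (x + real k * \<alpha>) \<in> B \<longleftrightarrow> frac x \<in> B" for x
  proof (induction k)
    case 0 then show ?case by simp
  next
    case (Suc k)
    have "frac (x + real (Suc k) * \<alpha>) = frac (frac (x + real k * \<alpha>) + \<alpha>)"
      by (simp add: frac_add_simps algebra_simps)
    moreover have "frac (x + real k * \<alpha>) \<in> {0..<1}"
      by (simp add: frac_lt_1)
    ultimately show ?case using inv Suc by auto
  qed
  moreover have "frac (x + real k * \<alpha> - of_int h) = frac (x + real k * \<alpha>)"
    by (simp add: frac_def)
  ultimately show ?thesis by simp
qed


lemma g_lip:
  fixes P :: "real set"
  assumes P[measurable]: "P \<in> sets borel"
  shows "measure lborel (P \<inter> {a+s<..b+s}) \<le> measure lborel (P \<inter> {a+t<..b+t}) + 2 * \<bar>s - t\<bar>"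
proof -
  define I1 where "I1 = {min (a+s) (a+t)<..max (a+s) (a+t)}"
  define I2 where "I2 = {min (b+s) (b+t)<..max (b+s) (b+t)}"
  have sub: "P \<inter> {a+s<..b+s} \<subseteq> (P \<inter> {a+t<..b+t}) \<union> I1 \<union> I2"
    unfolding I1_def I2_def by auto
  have "measure lborel (P \<inter> {a+s<..b+s}) \<le> measure lborel ((P \<inter> {a+t<..b+t}) \<union> I1 \<union> I2)"
  proof (rule measure_mono_fmeasurable[OF sub])
    show "P \<inter> {a + s<..b + s} \<in> sets lborel" by simp
    have "I1 \<in> fmeasurable lborel" "I2 \<in> fmeasurable lborel" unfolding I1_def I2_def by (rule fm_Ioc)+
    moreover have "P \<inter> {a+t<..b+t} \<in> fmeasurable lborel"
      by (rule fmeasurableI2[OF fm_Ioc[of "a+t" "b+t"]]) auto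
    ultimately show "P \<inter> {a+t<..b+t} \<union> I1 \<union> I2 \<in> fmeasurable lborel"
      by (intro fmeasurable.Un)
  qed
  also have "\<dots> \<le> measure lborel (P \<inter> {a+t<..b+t}) + measure lborel I1 + measure lborel I2"
  proof -
    have m: "P \<inter> {a+t<..b+t} \<in> sets lborel" "I1 \<in> sets lborel" "I2 \<in> sets lborel"
      unfolding I1_def I2_def by simp_all
    show ?thesis
      using measure_Un_le[OF sets.Un[OF m(1,2)] m(3)] measure_Un_le[OF m(1,2)] by linarith
  qed
  also have "measure lborel I1 = \<bar>s - t\<bar>" unfolding I1_def
    by (subst measure_lborel_Ioc) auto
  also have "measure lborel I2 = \<bar>s - t\<bar>" unfolding I2_def
    by (subst measure_lborel_Ioc) auto
  finally show ?thesis by simp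
qed

lemma g_const:
  fixes P :: "real set"
  assumes P[measurable]: "P \<in> sets borel" and irr: "\<alpha> \<notin> \<rat>"
    and inv: "\<And>x k h. x + (real k * \<alpha> - of_int h) \<in> P \<longleftrightarrow> x \<in> P"
  shows "measure lborel (P \<inter> {a+s<..b+s}) = measure lborel (P \<inter> {a<..b})"
proof (rule ccontr)
  let ?g = "\<lambda>s. measure lborel (P \<inter> {a+s<..b+s})"
  assume ne: "?g s \<noteq> measure lborel (P \<inter> {a<..b})"
  define d where "d = \<bar>?g s - ?g 0\<bar>"
  have d: "d > 0" using ne by (simp add: d_def)
  have d4: "d / 4 > 0" using d by simp
  obtain h k where hk: "\<bar>of_int k * \<alpha> - of_int h - s\<bar> < d / 4" "k > 0"
    using sequence_of_fractional_parts_is_dense[OF irr d4, of s] by blast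
  define t where "t = real (nat k) * \<alpha> - of_int h"
  have ts: "\<bar>t - s\<bar> < d / 4" using hk by (simp add: t_def)
  have "P \<inter> {a+t<..b+t} = (\<lambda>x. (-t) + x) -` (P \<inter> {a<..b})"
  proof -
    have "y \<in> P \<longleftrightarrow> (-t + y) \<in> P" for y
      using inv[of "-t + y" "nat k" h] by (simp add: t_def)
    then show ?thesis by auto
  qed
  moreover have "measure lborel ((\<lambda>x. (-t) + x) -` (P \<inter> {a<..b})) = measure lborel (P \<inter> {a<..b})"
    by (rule measure_translate) simp
  ultimately have "?g t = ?g 0"
    by simp
  moreover have "?g s \<le> ?g t + 2 * \<bar>s - t\<bar>" "?g t \<le> ?g s + 2 * \<bar>t - s\<bar>"
    using g_lip[OF P] by blast+
  moreover have "?g 0 = measure lborel (P \<inter> {a<..b})" by simp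
  ultimately have "?g s - ?g 0 \<le> 2 * \<bar>s - t\<bar>" "?g 0 - ?g s \<le> 2 * \<bar>s - t\<bar>"
    by (simp_all add: abs_minus_commute)
  then have "d \<le> 2 * \<bar>s - t\<bar>" unfolding d_def by (simp add: abs_le_iff)
  then show False using ts d by (simp add: abs_minus_commute)
qed


lemma rotation_ergodic:
  fixes B :: "real set"
  assumes B[measurable]: "B \<in> sets borel" and Bsub: "B \<subseteq> {0..<1}" and irr: "\<alpha> \<notin> \<rat>"
    and inv: "\<And>x. x \<in> {0..<1} \<Longrightarrow> x \<in> B \<longleftrightarrow> frac (x + \<alpha>) \<in> B"
  shows "emeasure lborel B = 0 \<or> emeasure lborel B = 1"
proof -
  define P where "P = frac -` B"
  have fm: "frac \<in> borel_measurable (borel::real measure)" unfolding frac_def by measurable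
  have P[measurable]: "P \<in> sets borel"
    using measurable_sets[OF fm B] by (simp add: P_def)
  have Pinv: "\<And>x k h. x + (real k * \<alpha> - of_int h) \<in> P \<longleftrightarrow> x \<in> P"
    using rot_inv_P[OF inv] by (simp add: P_def add_diff_eq)
  define g where "g a b = measure lborel (P \<inter> {a<..b})" for a b
  have gc: "measure lborel (P \<inter> {a+s<..b+s}) = g a b" for a b s
    using g_const[OF P irr Pinv] g_def by simp
  have E: "(\<integral>\<^sup>+y. indicator P (y+s) * indicator {a<..b} y \<partial>lborel) = ennreal (g a b)" for a b s
  proof -
    have "(\<integral>\<^sup>+y. indicator P (y+s) * indicator {a<..b} y \<partial>lborel)
        = (\<integral>\<^sup>+y. indicator (P \<inter> {a+s<..b+s}) (y + s) \<partial>lborel)"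
      by (auto intro!: nn_integral_cong simp: indicator_def)
    also have "\<dots> = (\<integral>\<^sup>+y. indicator (P \<inter> {a+s<..b+s}) y \<partial>lborel)"
      by (rule nn_translate) simp
    also have "\<dots> = emeasure lborel (P \<inter> {a+s<..b+s})" by simp
    also have "\<dots> = ennreal (measure lborel (P \<inter> {a+s<..b+s}))"
      by (rule emeasure_eq_measure2, rule fm_sub_Ioc) auto
    finally show ?thesis using gc by simp
  qed
  define M where "M s = density lborel (\<lambda>y. indicator P (y+s) * indicator {0<..1} y)" for s
  have EM: "emeasure (M s) {x<..} = ennreal (g (max 0 x) 1)" for s x
  proof -
    have "emeasure (M s) {x<..} = (\<integral>\<^sup>+y. (indicator P (y+s) * indicator {0<..1} y) * indicator {x<..} y \<partial>lborel)"
      unfolding M_def by (rule emeasure_density) auto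
    also have "\<dots> = (\<integral>\<^sup>+y. indicator P (y+s) * indicator {max 0 x<..1} y \<partial>lborel)"
      by (auto intro!: nn_integral_cong simp: indicator_def)
    finally show ?thesis using E by simp
  qed
  have Meq: "M s = M 0" for s
  proof (rule measure_eqI_lessThan)
    show "sets (M s) = sets borel" "sets (M 0) = sets borel" by (simp_all add: M_def)
    show "emeasure (M s) {x<..} < \<infinity>" for x using EM by simp
    show "emeasure (M s) {x<..} = emeasure (M 0) {x<..}" for x using EM by simp
  qed
  have Z: "(\<integral>\<^sup>+y. indicator P (y+s) * indicator {0<..1} y * indicator (-P) y \<partial>lborel) = 0" for s
  proof -
    have "(\<integral>\<^sup>+y. indicator P (y+s) * indicator {0<..1} y * indicator (-P) y \<partial>lborel) = emeasure (M s) (-P)"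
      unfolding M_def by (rule emeasure_density[symmetric]) auto
    also have "\<dots> = emeasure (M 0) (-P)" by (simp only: Meq[of s])
    also have "\<dots> = (\<integral>\<^sup>+y. indicator P (y+0) * indicator {0<..1} y * indicator (-P) y \<partial>lborel)"
      unfolding M_def by (rule emeasure_density) auto
    also have "\<dots> = 0"
      by (subst nn_integral_cong[where v="\<lambda>_. 0"]) (auto simp: indicator_def)
    finally show ?thesis .
  qed
  define F where "F y s = indicator P (y+s) * indicator {0<..1} y * indicator (-P) y * (indicator {0<..1} s :: ennreal)" for y s
  have Fub: "(\<integral>\<^sup>+s. \<integral>\<^sup>+y. F y s \<partial>lborel \<partial>lborel) = (\<integral>\<^sup>+y. \<integral>\<^sup>+s. F y s \<partial>lborel \<partial>lborel)"
    by (rule lborel_pair.Fubini') (simp add: F_def)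
  have L: "(\<integral>\<^sup>+s. \<integral>\<^sup>+y. F y s \<partial>lborel \<partial>lborel) = 0"
    unfolding F_def by (simp add: nn_integral_multc Z)
  have "(\<integral>\<^sup>+y. \<integral>\<^sup>+s. F y s \<partial>lborel \<partial>lborel)
      = (\<integral>\<^sup>+y. indicator {0<..1} y * indicator (-P) y * (\<integral>\<^sup>+s. indicator P (s+y) * indicator {0<..1} s \<partial>lborel) \<partial>lborel)"
    unfolding F_def
    by (subst nn_integral_cmult[symmetric]) (auto intro!: nn_integral_cong simp: ac_simps)
  also have "\<dots> = (\<integral>\<^sup>+y. indicator {0<..1} y * indicator (-P) y * ennreal (g 0 1) \<partial>lborel)"
    by (simp only: E)
  also have "\<dots> = (\<integral>\<^sup>+y. ennreal (g 0 1) * indicator ({0<..1} - P) y \<partial>lborel)"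
    by (auto intro!: nn_integral_cong simp: indicator_def)
  also have "\<dots> = ennreal (g 0 1) * emeasure lborel ({0<..1} - P)"
    by (subst nn_integral_cmult) auto
  finally have R0: "ennreal (g 0 1) * emeasure lborel ({0<..1} - P) = 0"
    using Fub L by simp
  have "{0<..1} - P = {0<..1} - (P \<inter> {0<..1})" by auto
  then have "measure lborel ({0<..1} - P) = measure lborel {0<..1::real} - measure lborel (P \<inter> {0<..1})"
    using measurable_measure_Diff[OF fm_Ioc[of 0 1], of "P \<inter> {0<..1}"] by auto
  then have m1: "measure lborel ({0<..1} - P) = 1 - g 0 1" by (simp add: g_def)
  have "emeasure lborel ({0<..1} - P) = ennreal (measure lborel ({0<..1} - P))"
    by (rule emeasure_eq_measure2, rule fm_sub_Ioc) auto
  with R0 m1 have "ennreal (g 0 1) * ennreal (1 - g 0 1) = 0" by simp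
  moreover have g0: "g 0 1 \<ge> 0" by (simp add: g_def)
  moreover have g1: "g 0 1 \<le> 1"
  proof -
    have "g 0 1 \<le> measure lborel {0<..1::real}" unfolding g_def
      by (rule measure_mono_fmeasurable[OF _ _ fm_Ioc]) auto
    then show ?thesis by simp
  qed
  ultimately have "g 0 1 * (1 - g 0 1) = 0"
    by (simp add: ennreal_mult[symmetric])
  then have c01: "g 0 1 = 0 \<or> g 0 1 = 1" by simp
  have fx: "\<And>x. 0 < x \<Longrightarrow> x < 1 \<Longrightarrow> frac x = x" by (simp add: frac_eq)
  have fB: "\<And>x. x \<in> B \<Longrightarrow> frac x = x" using Bsub frac_eq by auto
  have "B \<union> {0,1} = (P \<inter> {0<..1}) \<union> {0,1}"
    using Bsub fx fB by (auto simp: P_def le_less)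
  then have "emeasure lborel B = emeasure lborel (P \<inter> {0<..1})"
    by (metis emeasure_Un_null_set finite.emptyI finite_insert finite_imp_null_set_lborel
        B P sets.Int sets_lborel greaterThanAtMost_borel)
  also have "\<dots> = ennreal (g 0 1)" unfolding g_def
    by (rule emeasure_eq_measure2, rule fm_sub_Ioc) auto
  finally show ?thesis using c01 by auto
qed

lemma ennr: fixes m :: ennreal assumes "m \<le> m * m" "m \<le> 1" shows "m = 0 \<or> m = 1"
proof (cases m)
  case (real r)
  then have "r \<le> r * r" "r \<le> 1" using assms by (simp_all add: ennreal_mult[symmetric])
  then have "r = 0 \<or> r = 1" using real by (smt (verit) mult_le_cancel_left1)
  then show ?thesis using real by auto
next
  case top then show ?thesis using assms by (metis ennreal_one_neq_top top_le)
qed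

lemma torus_borel[measurable]: "torus \<in> sets borel"
  by (simp add: torus_def)

lemma null_rat:
  fixes \<sigma> :: "real \<Rightarrow> real"
  assumes "\<sigma> \<in> borel_measurable (restrict_space lborel torus)"
    and "emeasure lborel {x \<in> torus. \<sigma> x \<in> \<rat>} = 0"
  shows "{x \<in> torus. \<sigma> x \<in> \<rat>} \<in> null_sets lborel"
proof -
  have Q: "\<rat> \<in> sets (borel :: real measure)"
    by (rule sets.countable[OF _ countable_rat]) simp
  have "\<sigma> -` \<rat> \<inter> space (restrict_space lborel torus) \<in> sets (restrict_space lborel torus)"
    by (rule measurable_sets[OF assms(1) Q])
  moreover have "\<sigma> -` \<rat> \<inter> space (restrict_space lborel torus) = {x \<in> torus. \<sigma> x \<in> \<rat>}"
    by auto
  ultimately have "{x \<in> torus. \<sigma> x \<in> \<rat>} \<in> sets lborel"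
    by (simp add: sets_restrict_space_iff)
  then show ?thesis using assms(2) by (simp add: null_sets_def)
qed


theorem corollary7:
  fixes \<sigma>1 \<sigma>2 :: "real \<Rightarrow> real"
  assumes "\<sigma>1 ` torus \<subseteq> torus" and "\<sigma>2 ` torus \<subseteq> torus"
    and "\<sigma>1 \<in> borel_measurable (restrict_space lborel torus)"
    and "\<sigma>2 \<in> borel_measurable (restrict_space lborel torus)"
    and "emeasure lborel {x \<in> torus. \<sigma>1 x \<in> \<rat>} = 0"
    and "emeasure lborel {x \<in> torus. \<sigma>2 x \<in> \<rat>} = 0"
  shows "ergodic_action torus2 (Gamma \<sigma>1 \<sigma>2)"
  unfolding ergodic_action_def
proof (intro ballI impI)
  fix A :: "(real \<times> real) set"
  assume A: "A \<in> sets lborel" and Asub: "A \<subseteq> torus2"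
    and inv: "\<forall>g\<in>Gamma \<sigma>1 \<sigma>2. g -` A \<inter> torus2 = A"
  have Ab: "A \<in> sets (lborel \<Otimes>\<^sub>M lborel)" by (subst lborel_prod) (rule A)
  have hG: "hmap \<sigma>2 \<in> Gamma \<sigma>1 \<sigma>2" "vmap \<sigma>1 \<in> Gamma \<sigma>1 \<sigma>2"
    unfolding Gamma_def by (auto intro: gen_group.gen_base)
  have hinvA: "hmap \<sigma>2 -` A \<inter> torus2 = A" and vinvA: "vmap \<sigma>1 -` A \<inter> torus2 = A"
    using inv hG by auto
  have hA: "(x,y) \<in> A \<longleftrightarrow> (frac (x + \<sigma>2 y), y) \<in> A" if "x \<in> torus" "y \<in> torus" for x y
  proof -
    have "(x,y) \<in> A \<longleftrightarrow> (x,y) \<in> hmap \<sigma>2 -` A \<inter> torus2" using hinvA by simp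
    also have "\<dots> \<longleftrightarrow> (frac (x + \<sigma>2 y), y) \<in> A" using that by (simp add: hmap_def torus2_def)
    finally show ?thesis .
  qed
  have vA: "(x,y) \<in> A \<longleftrightarrow> (x, frac (y + \<sigma>1 x)) \<in> A" if "x \<in> torus" "y \<in> torus" for x y
  proof -
    have "(x,y) \<in> A \<longleftrightarrow> (x,y) \<in> vmap \<sigma>1 -` A \<inter> torus2" using vinvA by simp
    also have "\<dots> \<longleftrightarrow> (x, frac (y + \<sigma>1 x)) \<in> A" using that by (simp add: vmap_def torus2_def)
    finally show ?thesis .
  qed
  define Ax where "Ax x = Pair x -` A" for x
  define Ay where "Ay y = (\<lambda>x. (x,y)) -` A" for y
  have Ax_m: "Ax x \<in> sets borel" for x
    using sets_Pair1[OF Ab] by (simp add: Ax_def)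
  have Ay_m: "Ay y \<in> sets borel" for y
    using sets_Pair2[OF Ab] by (simp add: Ay_def)
  have Fx: "AE x in lborel. emeasure lborel (Ax x) = 0 \<or> emeasure lborel (Ax x) = 1"
    using AE_not_in[OF null_rat[OF assms(3,5)]]
  proof (rule eventually_mono)
    fix x assume x: "x \<notin> {x \<in> torus. \<sigma>1 x \<in> \<rat>}"
    show "emeasure lborel (Ax x) = 0 \<or> emeasure lborel (Ax x) = 1"
    proof (cases "x \<in> torus")
      case False
      then have "Ax x = {}" using Asub by (auto simp: Ax_def torus2_def)
      then show ?thesis by simp
    next
      case True
      show ?thesis
      proof (rule rotation_ergodic[OF Ax_m])
        show "Ax x \<subseteq> {0..<1}" using Asub by (auto simp: Ax_def torus2_def torus_def)
        show "\<sigma>1 x \<notin> \<rat>" using x True by simp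
        show "y \<in> Ax x \<longleftrightarrow> frac (y + \<sigma>1 x) \<in> Ax x" if "y \<in> {0..<1}" for y
          using vA[OF True, of y] that by (simp add: Ax_def torus_def)
      qed
    qed
  qed
  have Fy: "AE y in lborel. emeasure lborel (Ay y) = 0 \<or> emeasure lborel (Ay y) = 1"
    using AE_not_in[OF null_rat[OF assms(4,6)]]
  proof (rule eventually_mono)
    fix y assume y: "y \<notin> {x \<in> torus. \<sigma>2 x \<in> \<rat>}"
    show "emeasure lborel (Ay y) = 0 \<or> emeasure lborel (Ay y) = 1"
    proof (cases "y \<in> torus")
      case False
      then have "Ay y = {}" using Asub by (auto simp: Ay_def torus2_def)
      then show ?thesis by simp
    next
      case True
      show ?thesis
      proof (rule rotation_ergodic[OF Ay_m])
        show "Ay y \<subseteq> {0..<1}" using Asub by (auto simp: Ay_def torus2_def torus_def)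
        show "\<sigma>2 y \<notin> \<rat>" using y True by simp
        show "x \<in> Ay y \<longleftrightarrow> frac (x + \<sigma>2 y) \<in> Ay y" if "x \<in> {0..<1}" for x
          using hA[OF _ True, of x] that by (simp add: Ay_def torus_def)
      qed
    qed
  qed
  let ?m = "emeasure lborel A"
  have mA: "?m = emeasure (lborel \<Otimes>\<^sub>M lborel) A" by (simp only: lborel_prod)
  have mx: "?m = (\<integral>\<^sup>+x. emeasure lborel (Ax x) \<partial>lborel)"
    unfolding mA Ax_def by (rule lborel.emeasure_pair_measure_alt[OF Ab])
  have my: "?m = (\<integral>\<^sup>+y. emeasure lborel (Ay y) \<partial>lborel)"
    unfolding mA Ay_def by (rule lborel_pair.emeasure_pair_measure_alt2[OF Ab])
  have fxm: "(\<lambda>x. emeasure lborel (Ax x)) \<in> borel_measurable lborel"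
    unfolding Ax_def by (rule lborel_pair.measurable_emeasure_Pair1[OF Ab])
  have fym: "(\<lambda>y. emeasure lborel (Ay y)) \<in> borel_measurable lborel"
    unfolding Ay_def by (rule lborel_pair.measurable_emeasure_Pair2[OF Ab])
  define X1 where "X1 = {x. emeasure lborel (Ax x) = 1}"
  define Y1 where "Y1 = {y. emeasure lborel (Ay y) = 1}"
  have X1m: "X1 \<in> sets lborel"
    using measurable_sets[OF fxm, of "{1}"] by (simp add: X1_def vimage_def)
  have Y1m: "Y1 \<in> sets lborel"
    using measurable_sets[OF fym, of "{1}"] by (simp add: Y1_def vimage_def)
  have eX1: "emeasure lborel X1 = ?m"
  proof -
    have "emeasure lborel X1 = (\<integral>\<^sup>+x. indicator X1 x \<partial>lborel)" using X1m by simp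
    also have "\<dots> = (\<integral>\<^sup>+x. emeasure lborel (Ax x) \<partial>lborel)"
      by (rule nn_integral_cong_AE) (use Fx in \<open>auto simp: X1_def indicator_def elim!: eventually_mono\<close>)
    finally show ?thesis using mx by simp
  qed
  have eY1: "emeasure lborel Y1 = ?m"
  proof -
    have "emeasure lborel Y1 = (\<integral>\<^sup>+y. indicator Y1 y \<partial>lborel)" using Y1m by simp
    also have "\<dots> = (\<integral>\<^sup>+y. emeasure lborel (Ay y) \<partial>lborel)"
      by (rule nn_integral_cong_AE) (use Fy in \<open>auto simp: Y1_def indicator_def elim!: eventually_mono\<close>)
    finally show ?thesis using my by simp
  qed
  define N1 where "N1 = A \<inter> ((- X1) \<times> UNIV)"
  define N2 where "N2 = A \<inter> (UNIV \<times> (- Y1))"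
  have N1m: "N1 \<in> sets (lborel \<Otimes>\<^sub>M lborel)" unfolding N1_def
    using Ab X1m by (intro sets.Int pair_measureI) auto
  have N2m: "N2 \<in> sets (lborel \<Otimes>\<^sub>M lborel)" unfolding N2_def
    using Ab Y1m by (intro sets.Int pair_measureI) auto
  have eN1: "emeasure (lborel \<Otimes>\<^sub>M lborel) N1 = 0"
  proof -
    have "emeasure (lborel \<Otimes>\<^sub>M lborel) N1 = (\<integral>\<^sup>+x. emeasure lborel (Pair x -` N1) \<partial>lborel)"
      by (rule lborel.emeasure_pair_measure_alt[OF N1m])
    also have "\<dots> = (\<integral>\<^sup>+(x::real). 0 \<partial>lborel)"
    proof (rule nn_integral_cong_AE)
      show "AE x in lborel. emeasure lborel (Pair x -` N1) = 0"
        using Fx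
      proof (rule eventually_mono)
        fix x assume "emeasure lborel (Ax x) = 0 \<or> emeasure lborel (Ax x) = 1"
        moreover have "Pair x -` N1 = (if x \<in> X1 then {} else Ax x)"
          by (auto simp: N1_def Ax_def)
        ultimately show "emeasure lborel (Pair x -` N1) = 0"
          by (auto simp: X1_def)
      qed
    qed
    finally show ?thesis by simp
  qed
  have eN2: "emeasure (lborel \<Otimes>\<^sub>M lborel) N2 = 0"
  proof -
    have "emeasure (lborel \<Otimes>\<^sub>M lborel) N2 = (\<integral>\<^sup>+y. emeasure lborel ((\<lambda>x. (x,y)) -` N2) \<partial>lborel)"
      by (rule lborel_pair.emeasure_pair_measure_alt2[OF N2m])
    also have "\<dots> = (\<integral>\<^sup>+(y::real). 0 \<partial>lborel)"
    proof (rule nn_integral_cong_AE)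
      show "AE y in lborel. emeasure lborel ((\<lambda>x. (x,y)) -` N2) = 0"
        using Fy
      proof (rule eventually_mono)
        fix y assume "emeasure lborel (Ay y) = 0 \<or> emeasure lborel (Ay y) = 1"
        moreover have "(\<lambda>x. (x,y)) -` N2 = (if y \<in> Y1 then {} else Ay y)"
          by (auto simp: N2_def Ay_def)
        ultimately show "emeasure lborel ((\<lambda>x. (x,y)) -` N2) = 0"
          by (auto simp: Y1_def)
      qed
    qed
    finally show ?thesis by simp
  qed
  have XYm: "X1 \<times> Y1 \<in> sets (lborel \<Otimes>\<^sub>M lborel)" using X1m Y1m by (intro pair_measureI) auto
  have "?m = emeasure (lborel \<Otimes>\<^sub>M lborel) A" by (rule mA)
  also have "\<dots> \<le> emeasure (lborel \<Otimes>\<^sub>M lborel) ((X1 \<times> Y1) \<union> N1 \<union> N2)"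
  proof (rule emeasure_mono)
    show "A \<subseteq> X1 \<times> Y1 \<union> N1 \<union> N2" by (auto simp: N1_def N2_def)
    show "X1 \<times> Y1 \<union> N1 \<union> N2 \<in> sets (lborel \<Otimes>\<^sub>M lborel)" by (intro sets.Un XYm N1m N2m)
  qed
  also have "\<dots> \<le> emeasure (lborel \<Otimes>\<^sub>M lborel) ((X1 \<times> Y1) \<union> N1) + emeasure (lborel \<Otimes>\<^sub>M lborel) N2"
    by (intro emeasure_subadditive sets.Un XYm N1m N2m)
  also have "\<dots> \<le> emeasure (lborel \<Otimes>\<^sub>M lborel) (X1 \<times> Y1) + emeasure (lborel \<Otimes>\<^sub>M lborel) N1"
    using emeasure_subadditive[OF XYm N1m] eN2 by simp
  also have "\<dots> = ?m * ?m"
    using eN1 lborel.emeasure_pair_measure_Times[OF X1m Y1m] eX1 eY1 by simp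
  finally have mm: "?m \<le> ?m * ?m" .
  have tor: "emeasure lborel torus2 = 1"
  proof -
    have "emeasure lborel torus2 = emeasure (lborel \<Otimes>\<^sub>M lborel) (torus \<times> torus)"
      by (simp only: lborel_prod torus2_def)
    also have "\<dots> = 1"
      by (subst lborel.emeasure_pair_measure_Times) (auto simp: torus_def)
    finally show ?thesis .
  qed
  have "?m \<le> emeasure lborel torus2"
  proof (rule emeasure_mono[OF Asub])
    have "torus \<times> torus \<in> sets (lborel \<Otimes>\<^sub>M lborel)"
      by (intro pair_measureI) (simp_all add: torus_def)
    then show "torus2 \<in> sets lborel" by (simp only: lborel_prod torus2_def)
  qed
  with tor have "?m \<le> 1" by simp
  from ennr[OF mm this] tor show "?m = 0 \<or> ?m = emeasure lborel torus2" by simp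
qed

end
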